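(* If $N$ is a totally real submanifold in an almost complex manifold $(M,J)$, then $TN$ is a totally real submanifold in $(TM,J^c)$.
   Context: An almost complex structure is a smooth field $J$ of endomorphisms of $TM$ with $J^2=-\mathrm{Id}$; a submanifold $N$ is totally real if $T_pN\cap J(p)T_pN=\{0\}$ for all $p$. $J^c$ denotes the complete lift of $J$ to the tangent bundle $TM$: in local coordinates $(x^h)$ on $M$ and induced fibre coordinates $(t^h)$ on $TM$, writing $J=(J_i^h)$, it is given by the block matrix $J^c=\begin{pmatrix}J_i^h&0\\ t^a\partial_aJ_i^h&J_i^h\end{pmatrix}$; it is an almost complex structure on $TM$. *)

theory Defs
  imports "HOL-Analysis.Analysis"
begin

fun iter_dd :: "'a::real_normed_vector list \<Rightarrow> ('a \<Rightarrow> 'b::real_normed_vector) \<Rightarrow> 'a \<Rightarrow> 'b" where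
  "iter_dd [] f = f"
| "iter_dd (v # vs) f = (\<lambda>x. vector_derivative (\<lambda>t. iter_dd vs f (x + t *\<^sub>R v)) (at 0))"

definition smooth_on :: "('a::euclidean_space \<Rightarrow> 'b::real_normed_vector) \<Rightarrow> 'a set \<Rightarrow> bool" where
  "smooth_on f S \<longleftrightarrow> open S \<and>
     (\<forall>vs. continuous_on S (iter_dd vs f) \<and>
       (\<forall>v. \<forall>x\<in>S. ((\<lambda>t. iter_dd vs f (x + t *\<^sub>R v)) has_vector_derivative
                       iter_dd (v # vs) f x) (at 0)))"

definition almost_complex_on :: "('m::euclidean_space \<Rightarrow> ('m \<Rightarrow>\<^sub>L 'm)) \<Rightarrow> 'm set \<Rightarrow> bool" where
  "almost_complex_on J U \<longleftrightarrow> smooth_on J U \<and>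
     (\<forall>x\<in>U. \<forall>v. blinfun_apply (J x) (blinfun_apply (J x) v) = - v)"

definition totally_real_subspace :: "('a::real_vector \<Rightarrow> 'a) \<Rightarrow> 'a set \<Rightarrow> bool" where
  "totally_real_subspace Jp V \<longleftrightarrow> V \<inter> Jp ` V = {0}"

definition tangent_space :: "('a::real_normed_vector \<Rightarrow> 'b::real_normed_vector) \<Rightarrow> 'a \<Rightarrow> 'b set" where
  "tangent_space f z = range (frechet_derivative f (at z))"

(* embedded submanifold N = phi ` W of the coordinate domain U, given by a smooth
   injective immersion that is a homeomorphism onto its image *)
definition embedded_param :: "('k::euclidean_space \<Rightarrow> 'm::euclidean_space) \<Rightarrow> 'k set \<Rightarrow> 'm set \<Rightarrow> bool" where
  "embedded_param \<phi> W U \<longleftrightarrow> smooth_on \<phi> W \<and> \<phi> ` W \<subseteq> U \<and> inj_on \<phi> W \<and>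
     continuous_on (\<phi> ` W) (inv_into W \<phi>) \<and>
     (\<forall>x\<in>W. inj (frechet_derivative \<phi> (at x)))"

(* complete lift J^c in induced coordinates (x,t) on TU = U x 'm:
   J^c(x,t)(X,Y) = (J(x) X, (t^a d_a J)(x) X + J(x) Y) *)
definition complete_lift :: "('m::euclidean_space \<Rightarrow> ('m \<Rightarrow>\<^sub>L 'm)) \<Rightarrow> 'm \<times> 'm \<Rightarrow> 'm \<times> 'm \<Rightarrow> 'm \<times> 'm" where
  "complete_lift J = (\<lambda>(x, t) (X, Y).
     (blinfun_apply (J x) X,
      blinfun_apply (vector_derivative (\<lambda>s. J (x + s *\<^sub>R t)) (at 0)) X + blinfun_apply (J x) Y))"

(* induced parametrisation of TN: (x,w) |-> (phi x, d phi_x w) *)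
definition tangent_lift_param :: "('k::euclidean_space \<Rightarrow> 'm::euclidean_space) \<Rightarrow> 'k \<times> 'k \<Rightarrow> 'm \<times> 'm" where
  "tangent_lift_param \<phi> = (\<lambda>(x, w). (\<phi> x, frechet_derivative \<phi> (at x) w))"

end

theory Submission
  imports Defs
begin

lemma line_open: fixes x v :: "'a::real_normed_vector" shows "open S \<Longrightarrow> open {t::real. x + t *\<^sub>R v \<in> S}"
proof -
  assume "open S"
  have "continuous_on UNIV (\<lambda>t::real. x + t *\<^sub>R v)" by (intro continuous_intros)
  then have "open ((\<lambda>t::real. x + t *\<^sub>R v) -` S)"
    using \<open>open S\<close> by (simp add: open_vimage)
  then show ?thesis by (simp add: vimage_def)
qed

lemma vd_cong_open:
  assumes "open T" "0 \<in> T" "\<And>t. t \<in> T \<Longrightarrow> f t = g t"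
  shows "vector_derivative f (at 0) = vector_derivative g (at 0)"
proof -
  have "\<And>f'. (f has_vector_derivative f') (at 0) \<longleftrightarrow> (g has_vector_derivative f') (at 0)"
    using has_vector_derivative_transform_within_open[of f _ 0 T g]
      has_vector_derivative_transform_within_open[of g _ 0 T f] assms by auto
  then show ?thesis unfolding vector_derivative_def by simp
qed

lemma iter_dd_cong:
  assumes "open S" "\<And>y. y \<in> S \<Longrightarrow> f y = g y" "x \<in> S"
  shows "iter_dd vs f x = iter_dd vs g x"
  using assms(3)
proof (induction vs arbitrary: x)
  case Nil
  then show ?case using assms(2) by simp
next
  case (Cons v vs)
  have "vector_derivative (\<lambda>t. iter_dd vs f (x + t *\<^sub>R v)) (at 0) =
        vector_derivative (\<lambda>t. iter_dd vs g (x + t *\<^sub>R v)) (at 0)"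
    by (rule vd_cong_open[OF line_open[OF assms(1)]]) (use Cons in auto)
  then show ?case by simp
qed

lemma iter_dd_append: "iter_dd (vs @ [v]) f = iter_dd vs (iter_dd [v] f)"
  by (induction vs) auto

lemma iter_dd_append2: "iter_dd (u # vs) (iter_dd [v] f) = iter_dd (u # (vs @ [v])) f"
  using iter_dd_append[of "u#vs" v f] by simp

definition su :: "nat \<Rightarrow> ('a::euclidean_space \<Rightarrow> 'b::real_normed_vector) \<Rightarrow> 'a set \<Rightarrow> bool" where
  "su n f S \<longleftrightarrow> open S \<and>
     (\<forall>vs. length vs \<le> n \<longrightarrow> continuous_on S (iter_dd vs f) \<and>
       (\<forall>v. \<forall>x\<in>S. ((\<lambda>t. iter_dd vs f (x + t *\<^sub>R v)) has_vector_derivative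
                       iter_dd (v # vs) f x) (at 0)))"

lemma smooth_on_su: "smooth_on f S \<longleftrightarrow> (\<forall>n. su n f S)"
  unfolding smooth_on_def su_def by blast

lemma su_mono: "su n f S \<Longrightarrow> m \<le> n \<Longrightarrow> su m f S"
  unfolding su_def by auto

lemma su0: "su 0 f S \<longleftrightarrow> open S \<and> continuous_on S f \<and>
   (\<forall>v. \<forall>x\<in>S. ((\<lambda>t. f (x + t *\<^sub>R v)) has_vector_derivative iter_dd [v] f x) (at 0))"
  unfolding su_def by auto

lemma suD: "su n f S \<Longrightarrow> length vs \<le> n \<Longrightarrow> continuous_on S (iter_dd vs f) \<and>
       (\<forall>v. \<forall>x\<in>S. ((\<lambda>t. iter_dd vs f (x + t *\<^sub>R v)) has_vector_derivative
                       iter_dd (v # vs) f x) (at 0))"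
  unfolding su_def by blast

lemma su_Suc: "su (Suc n) f S \<longleftrightarrow> su 0 f S \<and> (\<forall>v. su n (iter_dd [v] f) S)"
proof
  assume A: "su (Suc n) f S"
  have "su n (iter_dd [v] f) S" for v
  proof -
    have "length vs \<le> n \<Longrightarrow> continuous_on S (iter_dd vs (iter_dd [v] f)) \<and>
       (\<forall>u. \<forall>x\<in>S. ((\<lambda>t. iter_dd vs (iter_dd [v] f) (x + t *\<^sub>R u)) has_vector_derivative
                       iter_dd (u # vs) (iter_dd [v] f) x) (at 0))" for vs
    proof -
      assume "length vs \<le> n"
      then have l: "length (vs @ [v]) \<le> Suc n" by simp
      have "continuous_on S (iter_dd (vs@[v]) f) \<and> (\<forall>u. \<forall>x\<in>S. ((\<lambda>t. iter_dd (vs@[v]) f (x + t *\<^sub>R u)) has_vector_derivative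
                       iter_dd (u # (vs @ [v])) f x) (at 0))" using suD[OF A l] by blast
      then show ?thesis unfolding iter_dd_append[symmetric] append_Cons by blast
    qed
    note H = this
    have o: "open S" using A unfolding su_def by blast
    show ?thesis unfolding su_def
      apply (rule conjI[OF o])
      apply (intro allI impI)
      by (rule H)
  qed
  then show "su 0 f S \<and> (\<forall>v. su n (iter_dd [v] f) S)" using A su_mono by blast
next
  assume A: "su 0 f S \<and> (\<forall>v. su n (iter_dd [v] f) S)"
  have "length vs \<le> Suc n \<Longrightarrow> continuous_on S (iter_dd vs f) \<and>
       (\<forall>v. \<forall>x\<in>S. ((\<lambda>t. iter_dd vs f (x + t *\<^sub>R v)) has_vector_derivative
                       iter_dd (v # vs) f x) (at 0))" for vs
  proof (cases vs rule: rev_cases)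
    case Nil
    have "su 0 f S" using A by blast
    then show ?thesis unfolding su0 Nil iter_dd.simps(1) by blast
  next
    case (snoc ws w)
    assume l: "length vs \<le> Suc n"
    then have "length ws \<le> n" using snoc by simp
    then have "continuous_on S (iter_dd ws (iter_dd [w] f)) \<and>
       (\<forall>u. \<forall>x\<in>S. ((\<lambda>t. iter_dd ws (iter_dd [w] f) (x + t *\<^sub>R u)) has_vector_derivative
                       iter_dd (u # ws) (iter_dd [w] f) x) (at 0))"
      using suD[of n "iter_dd [w] f" S ws] A by blast
    then show ?thesis unfolding snoc iter_dd_append[symmetric] append_Cons by blast
  qed
  note H = this
  have o: "open S" using A unfolding su0 by blast
  show "su (Suc n) f S" unfolding su_def
    apply (rule conjI[OF o])
    apply (intro allI impI)
    by (rule H)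
qed

lemma su_cong:
  assumes "open S" "\<And>y. y \<in> S \<Longrightarrow> f y = g y" "su n f S"
  shows "su n g S"
proof -
  have e: "\<And>vs x. x \<in> S \<Longrightarrow> iter_dd vs f x = iter_dd vs g x"
    using iter_dd_cong[of S f g] assms(1,2) by blast
  have H: "continuous_on S (iter_dd vs g) \<and>
       (\<forall>v. \<forall>x\<in>S. ((\<lambda>t. iter_dd vs g (x + t *\<^sub>R v)) has_vector_derivative
                       iter_dd (v # vs) g x) (at 0))" if l: "length vs \<le> n" for vs
  proof
    have A: "continuous_on S (iter_dd vs f) \<and>
       (\<forall>v. \<forall>x\<in>S. ((\<lambda>t. iter_dd vs f (x + t *\<^sub>R v)) has_vector_derivative
                       iter_dd (v # vs) f x) (at 0))" by (rule suD[OF assms(3) l])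
    have "\<And>x. x \<in> S \<Longrightarrow> iter_dd vs f x = iter_dd vs g x" by (rule e)
    then show "continuous_on S (iter_dd vs g)"
      using continuous_on_cong[of S S "iter_dd vs f" "iter_dd vs g"] A by simp
    show "\<forall>v. \<forall>x\<in>S. ((\<lambda>t. iter_dd vs g (x + t *\<^sub>R v)) has_vector_derivative
                       iter_dd (v # vs) g x) (at 0)"
    proof (intro allI ballI)
      fix v x assume x: "x \<in> S"
      have "((\<lambda>t. iter_dd vs f (x + t *\<^sub>R v)) has_vector_derivative iter_dd (v # vs) f x) (at 0)"
        using A x by blast
      then have "((\<lambda>t. iter_dd vs g (x + t *\<^sub>R v)) has_vector_derivative iter_dd (v # vs) f x) (at 0)"
      proof (rule has_vector_derivative_transform_within_open[OF _ line_open[OF assms(1)]])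
        show "0 \<in> {t. x + t *\<^sub>R v \<in> S}" using x by simp
        show "\<And>y. y \<in> {t. x + t *\<^sub>R v \<in> S} \<Longrightarrow> iter_dd vs f (x + y *\<^sub>R v) = iter_dd vs g (x + y *\<^sub>R v)"
          using e by blast
      qed
      then show "((\<lambda>t. iter_dd vs g (x + t *\<^sub>R v)) has_vector_derivative iter_dd (v # vs) g x) (at 0)"
        unfolding e[OF x] .
    qed
  qed
  show ?thesis unfolding su_def
    apply (rule conjI[OF assms(1)])
    apply (intro allI impI)
    by (rule H)
qed

declare iter_dd.simps(2)[simp del]

lemma su_open: "su n f S \<Longrightarrow> open S" unfolding su_def by blast

lemma su0I: "open S \<Longrightarrow> continuous_on S f \<Longrightarrow>
  (\<And>v x. x \<in> S \<Longrightarrow> ((\<lambda>t. f (x + t *\<^sub>R v)) has_vector_derivative iter_dd [v] f x) (at 0)) \<Longrightarrow> su 0 f S"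
  unfolding su0 by blast

lemma dd_eq: "((\<lambda>t. f (x + t *\<^sub>R v)) has_vector_derivative D) (at 0) \<Longrightarrow> iter_dd [v] f x = D"
  by (simp add: vector_derivative_at iter_dd.simps)

lemma su_Suc_mono: "su (Suc n) f S \<Longrightarrow> su n f S"
  by (erule su_mono) simp

lemma su_SucD: "su (Suc n) f S \<Longrightarrow> su n (iter_dd [v] f) S"
  using su_Suc by blast

lemma su_SucI: "su 0 f S \<Longrightarrow> (\<And>v. su n (iter_dd [v] f) S) \<Longrightarrow> su (Suc n) f S"
  using su_Suc by blast

lemma su_line: "su n f S \<Longrightarrow> x \<in> S \<Longrightarrow>
   ((\<lambda>t. f (x + t *\<^sub>R v)) has_vector_derivative iter_dd [v] f x) (at 0)"
  using su_mono[of n f S 0] unfolding su0 by blast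

lemma su_cont: "su n f S \<Longrightarrow> continuous_on S f"
  using su_mono[of n f S 0] unfolding su0 by blast

lemma su_line_shift:
  assumes "su n f S" "y + s *\<^sub>R v \<in> S"
  shows "((\<lambda>t. f (y + t *\<^sub>R v)) has_vector_derivative iter_dd [v] f (y + s *\<^sub>R v)) (at s)"
proof -
  let ?x = "y + s *\<^sub>R v"
  have g0: "((\<lambda>t. f (?x + t *\<^sub>R v)) has_vector_derivative iter_dd [v] f ?x) (at 0)"
    by (rule su_line[OF assms])
  have e: "(\<lambda>t::real. t - s) s = 0" by simp
  have h: "((\<lambda>t. t - s) has_vector_derivative 1) (at s)"
    using has_vector_derivative_diff[OF has_vector_derivative_id has_vector_derivative_const[of s]]
    by simp
  have F1: "(((\<lambda>t. f (?x + t *\<^sub>R v)) \<circ> (\<lambda>t. t - s)) has_vector_derivative (1::real) *\<^sub>R iter_dd [v] f ?x) (at s)"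
    by (rule vector_diff_chain_at[OF h], unfold e, rule g0)
  have F2: "((\<lambda>t. f (?x + t *\<^sub>R v)) \<circ> (\<lambda>t. t - s)) = (\<lambda>t. f (y + t *\<^sub>R v))"
  proof
    fix t
    have "y + s *\<^sub>R v + (t - s) *\<^sub>R v = y + t *\<^sub>R v" by (simp add: scaleR_diff_left)
    then show "((\<lambda>t. f (?x + t *\<^sub>R v)) \<circ> (\<lambda>t. t - s)) t = f (y + t *\<^sub>R v)"
      unfolding o_def by (rule arg_cong)
  qed
  have "((\<lambda>t. f (y + t *\<^sub>R v)) has_vector_derivative (1::real) *\<^sub>R iter_dd [v] f ?x) (at s)"
    using F1 unfolding F2 .
  then show ?thesis unfolding scaleR_one .
qed

lemma su_add: "su n f S \<Longrightarrow> su n g S \<Longrightarrow> su n (\<lambda>x. f x + g x) S"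
proof (induction n arbitrary: f g)
  case 0
  have dd: "iter_dd [v] (\<lambda>x. f x + g x) x = iter_dd [v] f x + iter_dd [v] g x" if x: "x \<in> S" for v x
    by (rule dd_eq, rule has_vector_derivative_add[OF su_line[OF 0(1) x] su_line[OF 0(2) x]])
  show ?case
  proof (rule su0I[OF su_open[OF 0(1)]])
    show "continuous_on S (\<lambda>x. f x + g x)"
      by (rule continuous_on_add[OF su_cont[OF 0(1)] su_cont[OF 0(2)]])
    fix v x assume x: "x \<in> S"
    show "((\<lambda>t. f (x + t *\<^sub>R v) + g (x + t *\<^sub>R v)) has_vector_derivative iter_dd [v] (\<lambda>x. f x + g x) x) (at 0)"
      unfolding dd[OF x] by (rule has_vector_derivative_add[OF su_line[OF 0(1) x] su_line[OF 0(2) x]])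
  qed
next
  case (Suc n)
  have dd: "iter_dd [v] (\<lambda>x. f x + g x) x = iter_dd [v] f x + iter_dd [v] g x" if x: "x \<in> S" for v x
    by (rule dd_eq, rule has_vector_derivative_add[OF su_line[OF Suc.prems(1) x] su_line[OF Suc.prems(2) x]])
  have "su n (\<lambda>x. f x + g x) S"
    by (rule Suc.IH[OF su_Suc_mono[OF Suc.prems(1)] su_Suc_mono[OF Suc.prems(2)]])
  then have S0: "su 0 (\<lambda>x. f x + g x) S" by (rule su_mono) simp
  have SD: "su n (iter_dd [v] (\<lambda>x. f x + g x)) S" for v
  proof (rule su_cong[OF su_open[OF Suc.prems(1)]])
    show "su n (\<lambda>x. iter_dd [v] f x + iter_dd [v] g x) S"
      by (rule Suc.IH[OF su_SucD[OF Suc.prems(1)] su_SucD[OF Suc.prems(2)]])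
    show "\<And>y. y \<in> S \<Longrightarrow> iter_dd [v] f y + iter_dd [v] g y = iter_dd [v] (\<lambda>x. f x + g x) y"
      using dd by simp
  qed
  show ?case by (rule su_SucI[OF S0 SD])
qed

lemma su_const: "open S \<Longrightarrow> su n (\<lambda>x. c) S"
proof (induction n arbitrary: c)
  case 0
  have dd: "iter_dd [v] (\<lambda>x. c) x = 0" for v x by (rule dd_eq) simp
  show ?case by (rule su0I[OF 0]) (auto simp: dd)
next
  case (Suc n)
  have dd: "iter_dd [v] (\<lambda>x. c) = (\<lambda>x. 0)" for v by (rule ext, rule dd_eq) simp
  have "su n (\<lambda>x. c) S" using Suc by simp
  then have S0: "su 0 (\<lambda>x. c) S" by (rule su_mono) simp
  then show ?case by (rule su_SucI) (use Suc in \<open>simp add: dd\<close>)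
qed

lemma su_linear: "open S \<Longrightarrow> bounded_linear l \<Longrightarrow> su n l S"
proof -
  assume S: "open S" and l: "bounded_linear l"
  have ddl: "((\<lambda>t. l (x + t *\<^sub>R v)) has_vector_derivative l v) (at 0)" for x v
  proof -
    have "((\<lambda>t. x + t *\<^sub>R v) has_vector_derivative v) (at 0)"
      using has_vector_derivative_add[OF has_vector_derivative_const[of x]
          has_vector_derivative_scaleR[OF DERIV_ident has_vector_derivative_const[of v]]]
      by simp
    then show ?thesis using bounded_linear.has_vector_derivative[OF l] by blast
  qed
  have dd: "iter_dd [v] l = (\<lambda>x. l v)" for v
    by (rule ext, rule dd_eq, rule ddl)
  have l0: "su 0 l S" using S ddl dd
    by (auto intro!: su0I linear_continuous_on l)
  show "su n l S"
  proof (cases n)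
    case 0 then show ?thesis using l0 by simp
  next
    case (Suc m) then show ?thesis using l0 by (auto intro!: su_SucI simp: dd su_const[OF S])
  qed
qed

lemma su_sum: "finite A \<Longrightarrow> open S \<Longrightarrow> (\<And>i. i \<in> A \<Longrightarrow> su n (f i) S) \<Longrightarrow> su n (\<lambda>x. \<Sum>i\<in>A. f i x) S"
proof (induction A rule: finite_induct)
  case empty
  then show ?case using su_const by simp
next
  case (insert a A)
  have "su n (\<lambda>x. f a x + (\<Sum>i\<in>A. f i x)) S"
    by (rule su_add) (use insert in auto)
  then show ?case using insert(1,2) by simp
qed

lemma su_pair: "su n f S \<Longrightarrow> su n g S \<Longrightarrow> su n (\<lambda>x. (f x, g x)) S"
proof (induction n arbitrary: f g)
  case 0
  have dd: "iter_dd [v] (\<lambda>x. (f x, g x)) x = (iter_dd [v] f x, iter_dd [v] g x)" if x: "x \<in> S" for v x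
    by (rule dd_eq, rule has_vector_derivative_Pair[OF su_line[OF 0(1) x] su_line[OF 0(2) x]])
  show ?case
  proof (rule su0I[OF su_open[OF 0(1)]])
    show "continuous_on S (\<lambda>x. (f x, g x))"
      by (rule continuous_on_Pair[OF su_cont[OF 0(1)] su_cont[OF 0(2)]])
    fix v x assume x: "x \<in> S"
    show "((\<lambda>t. (f (x + t *\<^sub>R v), g (x + t *\<^sub>R v))) has_vector_derivative iter_dd [v] (\<lambda>x. (f x, g x)) x) (at 0)"
      unfolding dd[OF x] by (rule has_vector_derivative_Pair[OF su_line[OF 0(1) x] su_line[OF 0(2) x]])
  qed
next
  case (Suc n)
  have dd: "iter_dd [v] (\<lambda>x. (f x, g x)) x = (iter_dd [v] f x, iter_dd [v] g x)" if x: "x \<in> S" for v x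
    by (rule dd_eq, rule has_vector_derivative_Pair[OF su_line[OF Suc.prems(1) x] su_line[OF Suc.prems(2) x]])
  have "su n (\<lambda>x. (f x, g x)) S"
    by (rule Suc.IH[OF su_Suc_mono[OF Suc.prems(1)] su_Suc_mono[OF Suc.prems(2)]])
  then have S0: "su 0 (\<lambda>x. (f x, g x)) S" by (rule su_mono) simp
  have SD: "su n (iter_dd [v] (\<lambda>x. (f x, g x))) S" for v
  proof (rule su_cong[OF su_open[OF Suc.prems(1)]])
    show "su n (\<lambda>x. (iter_dd [v] f x, iter_dd [v] g x)) S"
      by (rule Suc.IH[OF su_SucD[OF Suc.prems(1)] su_SucD[OF Suc.prems(2)]])
    show "\<And>y. y \<in> S \<Longrightarrow> (iter_dd [v] f y, iter_dd [v] g y) = iter_dd [v] (\<lambda>x. (f x, g x)) y"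
      using dd by simp
  qed
  show ?case by (rule su_SucI[OF S0 SD])
qed

lemma dd_pair: "su n f S \<Longrightarrow> su n g S \<Longrightarrow> x \<in> S \<Longrightarrow>
   iter_dd [v] (\<lambda>x. (f x, g x)) x = (iter_dd [v] f x, iter_dd [v] g x)"
  by (rule dd_eq, rule has_vector_derivative_Pair[OF su_line su_line])

lemma su_scaleR: "su n c S \<Longrightarrow> su n g S \<Longrightarrow> su n (\<lambda>x. c x *\<^sub>R g x) S"
proof (induction n arbitrary: c g)
  case 0
  have lc: "((\<lambda>t. c (x + t *\<^sub>R v)) has_field_derivative iter_dd [v] c x) (at 0)" if "x \<in> S" for x v
    using su_line[OF 0(1) that] has_real_derivative_iff_has_vector_derivative by blast
  have hv: "((\<lambda>t. c (x + t *\<^sub>R v) *\<^sub>R g (x + t *\<^sub>R v)) has_vector_derivative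
     c x *\<^sub>R iter_dd [v] g x + iter_dd [v] c x *\<^sub>R g x) (at 0)" if "x \<in> S" for x v
    using has_vector_derivative_scaleR[OF lc[OF that] su_line[OF 0(2) that]] by simp
  have dd: "iter_dd [v] (\<lambda>x. c x *\<^sub>R g x) x = c x *\<^sub>R iter_dd [v] g x + iter_dd [v] c x *\<^sub>R g x" if x: "x \<in> S" for v x
    by (rule dd_eq, rule hv[OF x])
  show ?case
  proof (rule su0I[OF su_open[OF 0(1)]])
    show "continuous_on S (\<lambda>x. c x *\<^sub>R g x)"
      by (rule continuous_on_scaleR[OF su_cont[OF 0(1)] su_cont[OF 0(2)]])
    fix v x assume x: "x \<in> S"
    show "((\<lambda>t. c (x + t *\<^sub>R v) *\<^sub>R g (x + t *\<^sub>R v)) has_vector_derivative iter_dd [v] (\<lambda>x. c x *\<^sub>R g x) x) (at 0)"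
      unfolding dd[OF x] by (rule hv[OF x])
  qed
next
  case (Suc n)
  have lc: "((\<lambda>t. c (x + t *\<^sub>R v)) has_field_derivative iter_dd [v] c x) (at 0)" if "x \<in> S" for x v
    using su_line[OF Suc(2) that] has_real_derivative_iff_has_vector_derivative by blast
  have hv: "((\<lambda>t. c (x + t *\<^sub>R v) *\<^sub>R g (x + t *\<^sub>R v)) has_vector_derivative
     c x *\<^sub>R iter_dd [v] g x + iter_dd [v] c x *\<^sub>R g x) (at 0)" if "x \<in> S" for x v
    using has_vector_derivative_scaleR[OF lc[OF that] su_line[OF Suc(3) that]] by simp
  have dd: "iter_dd [v] (\<lambda>x. c x *\<^sub>R g x) x = c x *\<^sub>R iter_dd [v] g x + iter_dd [v] c x *\<^sub>R g x" if x: "x \<in> S" for v x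
    by (rule dd_eq, rule hv[OF x])
  have "su n (\<lambda>x. c x *\<^sub>R g x) S"
    by (rule Suc.IH[OF su_Suc_mono[OF Suc.prems(1)] su_Suc_mono[OF Suc.prems(2)]])
  then have S0: "su 0 (\<lambda>x. c x *\<^sub>R g x) S" by (rule su_mono) simp
  have SD: "su n (iter_dd [v] (\<lambda>x. c x *\<^sub>R g x)) S" for v
  proof (rule su_cong[OF su_open[OF Suc.prems(1)]])
    have a: "su n c S" "su n g S" using su_Suc_mono Suc.prems by auto
    have b: "su n (iter_dd [v] c) S" "su n (iter_dd [v] g) S" using Suc.prems su_SucD by auto
    show "su n (\<lambda>x. c x *\<^sub>R iter_dd [v] g x + iter_dd [v] c x *\<^sub>R g x) S"
      by (rule su_add[OF Suc.IH[OF a(1) b(2)] Suc.IH[OF b(1) a(2)]])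
    show "\<And>y. y \<in> S \<Longrightarrow> c y *\<^sub>R iter_dd [v] g y + iter_dd [v] c y *\<^sub>R g y = iter_dd [v] (\<lambda>x. c x *\<^sub>R g x) y"
      using dd by simp
  qed
  show ?case by (rule su_SucI[OF S0 SD])
qed

lemma iter_dd_fst: "iter_dd [v] (\<lambda>z. f (fst z)) = (\<lambda>z. iter_dd [fst v] f (fst z))"
  by (rule ext) (simp add: algebra_simps iter_dd.simps)

lemma su_fst:
  fixes f :: "'a::euclidean_space \<Rightarrow> 'b::real_normed_vector"
  shows "su n f S \<Longrightarrow> su n (\<lambda>z::'a \<times> 'c::euclidean_space. f (fst z)) (S \<times> UNIV)"
proof (induction n arbitrary: f)
  case 0
  have c: "continuous_on (S \<times> UNIV) (\<lambda>z::'a \<times> 'c. f (fst z))"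
    by (rule continuous_on_compose2[of S f _ fst]) (auto intro: continuous_intros su_cont[OF 0])
  show ?case unfolding su0 iter_dd_fst
    using su_open[OF 0] c su_line[OF 0] by (auto intro!: open_Times simp: algebra_simps)
next
  case (Suc n)
  have c: "continuous_on (S \<times> UNIV) (\<lambda>z::'a \<times> 'c. f (fst z))"
    by (rule continuous_on_compose2[of S f _ fst]) (auto intro: continuous_intros su_cont[OF Suc.prems])
  have S0: "su 0 (\<lambda>z::'a \<times> 'c. f (fst z)) (S \<times> UNIV)" unfolding su0 iter_dd_fst
    using su_open[OF Suc.prems] c su_line[OF Suc.prems] by (auto intro!: open_Times simp: algebra_simps)
  have SD: "su n (iter_dd [v] (\<lambda>z::'a \<times> 'c. f (fst z))) (S \<times> UNIV)" for v
    unfolding iter_dd_fst by (rule Suc.IH[OF su_SucD[OF Suc.prems]])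
  show ?case by (rule su_SucI[OF S0 SD])
qed

lemma su_has_derivative:
  fixes f :: "'a::euclidean_space \<Rightarrow> 'b::real_normed_vector"
  assumes su: "su (Suc 0) f S" and x: "x \<in> S"
  shows "(f has_derivative (\<lambda>h. \<Sum>i\<in>Basis. (h \<bullet> i) *\<^sub>R iter_dd [i] f x)) (at x)"
proof -
  define P where "P i = iter_dd [i] f" for i
  have S: "open S" by (rule su_open[OF su])
  have contP: "continuous_on S (P i)" for i
    unfolding P_def by (rule su_cont[OF su_SucD[OF su]])
  obtain r where r: "r > 0" "ball x r \<subseteq> S" using openE[OF S x] by blast
  have Q: "B \<subseteq> Basis \<Longrightarrow> \<forall>e>0. \<exists>d>0. \<forall>h. (\<forall>i\<in>Basis - B. h \<bullet> i = 0) \<longrightarrow> norm h < d \<longrightarrow>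
        norm (f (x + h) - f x - (\<Sum>i\<in>B. (h \<bullet> i) *\<^sub>R P i x)) \<le> e * norm h" for B
  proof -
    assume B: "B \<subseteq> Basis"
    have "finite B" using B finite_Basis finite_subset by blast
    then show ?thesis using B
    proof (induction B rule: finite_induct)
      case empty
      show ?case
      proof (intro allI impI exI[of _ 1] conjI)
        fix e h :: real
        show "(0::real) < 1" by simp
      next
        fix e :: real and h :: 'a
        assume "\<forall>i\<in>Basis - {}. h \<bullet> i = 0"
        then have "h = 0" using euclidean_all_zero_iff by auto
        then show "norm (f (x + h) - f x - (\<Sum>i\<in>{}. (h \<bullet> i) *\<^sub>R P i x)) \<le> e * norm h" by simp
      qed
    next
      case (insert j B)
      have j: "j \<in> Basis" using insert by blast
      have BB: "B \<subseteq> Basis" using insert by blast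
      show ?case
      proof (intro allI impI)
        fix e :: real assume e: "e > 0"
        obtain d1 where d1: "d1 > 0" "\<And>h. (\<forall>i\<in>Basis - B. h \<bullet> i = 0) \<Longrightarrow> norm h < d1 \<Longrightarrow>
            norm (f (x + h) - f x - (\<Sum>i\<in>B. (h \<bullet> i) *\<^sub>R P i x)) \<le> (e/4) * norm h"
        proof -
          have "e/4 > 0" using e by simp
          then show ?thesis using insert.IH[OF BB] that by blast
        qed
        obtain d2 where d2: "d2 > 0" "\<And>y. y \<in> S \<Longrightarrow> dist y x < d2 \<Longrightarrow> dist (P j y) (P j x) < e/8"
        proof -
          have "e/8 > 0" using e by simp
          then show ?thesis using contP[of j] x that unfolding continuous_on_iff by blast
        qed
        define d where "d = min (d1/2) (min (r/3) (d2/3))"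
        have d: "d > 0" using d1 d2 r by (simp add: d_def)
        have "\<forall>h. (\<forall>i\<in>Basis - insert j B. h \<bullet> i = 0) \<longrightarrow> norm h < d \<longrightarrow>
          norm (f (x + h) - f x - (\<Sum>i\<in>insert j B. (h \<bullet> i) *\<^sub>R P i x)) \<le> e * norm h"
        proof (intro allI impI)
          fix h :: 'a
          assume hz: "\<forall>i\<in>Basis - insert j B. h \<bullet> i = 0" and hd: "norm h < d"
          define s where "s = h \<bullet> j"
          define h' where "h' = h - s *\<^sub>R j"
          have s_le: "\<bar>s\<bar> \<le> norm h" unfolding s_def by (rule Basis_le_norm[OF j])
          have nj: "norm j = 1" using j by simp
          have h'_le: "norm h' \<le> 2 * norm h"
          proof -
            have "norm h' \<le> norm h + norm (s *\<^sub>R j)" unfolding h'_def by (rule norm_triangle_ineq4)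
            also have "norm (s *\<^sub>R j) = \<bar>s\<bar>" using nj by simp
            finally show ?thesis using s_le by linarith
          qed
          have h'z: "\<forall>i\<in>Basis - B. h' \<bullet> i = 0"
          proof
            fix i assume i: "i \<in> Basis - B"
            show "h' \<bullet> i = 0"
            proof (cases "i = j")
              case True
              then show ?thesis using j unfolding h'_def s_def by (simp add: inner_diff_left)
            next
              case False
              then have "h \<bullet> i = 0" using hz i by blast
              moreover have "j \<bullet> i = 0" using False i j inner_not_same_Basis by blast
              ultimately show ?thesis unfolding h'_def by (simp add: inner_diff_left)
            qed
          qed
          have sumeq: "(\<Sum>i\<in>B. (h' \<bullet> i) *\<^sub>R P i x) = (\<Sum>i\<in>B. (h \<bullet> i) *\<^sub>R P i x)"
          proof (rule sum.cong[OF refl])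
            fix i assume i: "i \<in> B"
            then have "i \<noteq> j" using insert(2) by blast
            then have "j \<bullet> i = 0" using i BB j inner_not_same_Basis by blast
            then show "(h' \<bullet> i) *\<^sub>R P i x = (h \<bullet> i) *\<^sub>R P i x" unfolding h'_def by (simp add: inner_diff_left)
          qed
          have h'd1: "norm h' < d1" using h'_le hd d_def by simp
          have part2: "norm (f (x + h') - f x - (\<Sum>i\<in>B. (h \<bullet> i) *\<^sub>R P i x)) \<le> (e/2) * norm h"
          proof -
            have "norm (f (x + h') - f x - (\<Sum>i\<in>B. (h' \<bullet> i) *\<^sub>R P i x)) \<le> (e/4) * norm h'"
              by (rule d1(2)[OF h'z h'd1])
            also have "\<dots> \<le> (e/4) * (2 * norm h)" using h'_le e by (intro mult_left_mono) auto
            finally show ?thesis unfolding sumeq by simp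
          qed
          define q where "q = x + h'"
          have qh: "q + s *\<^sub>R j = x + h" unfolding q_def h'_def by simp
          define T where "T = closed_segment 0 s"
          have Tb: "\<bar>t\<bar> \<le> \<bar>s\<bar>" if "t \<in> T" for t
          proof -
            have "norm (t - 0) \<le> norm (s - 0)" using that unfolding T_def by (rule segment_bound1)
            then show ?thesis by simp
          qed
          have near: "dist (q + t *\<^sub>R j) x < 3 * d" if "t \<in> T" for t
          proof -
            have "dist (q + t *\<^sub>R j) x = norm (h' + t *\<^sub>R j)" unfolding q_def dist_norm by simp
            also have "\<dots> \<le> norm h' + \<bar>t\<bar>" using norm_triangle_ineq[of h' "t *\<^sub>R j"] nj by simp
            also have "\<dots> \<le> 3 * norm h" using h'_le Tb[OF that] s_le by linarith
            also have "\<dots> < 3 * d" using hd by simp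
            finally show ?thesis .
          qed
          have inS: "q + t *\<^sub>R j \<in> S" if "t \<in> T" for t
          proof -
            have "3 * d \<le> r" unfolding d_def by simp
            then have "q + t *\<^sub>R j \<in> ball x r" using near[OF that] by (simp add: dist_commute)
            then show ?thesis using r by blast
          qed
          have Pnear: "norm (P j (q + t *\<^sub>R j) - P j x) < e/8" if "t \<in> T" for t
          proof -
            have "3 * d \<le> d2" unfolding d_def by simp
            then have "dist (q + t *\<^sub>R j) x < d2" using near[OF that] by simp
            then show ?thesis using d2(2)[OF inS[OF that]] by (simp add: dist_norm)
          qed
          have T0: "0 \<in> T" unfolding T_def by simp
          have Ts: "s \<in> T" unfolding T_def by simp
          have der: "((\<lambda>t. f (q + t *\<^sub>R j)) has_vector_derivative P j (q + t *\<^sub>R j)) (at t within T)"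
            if "t \<in> T" for t
            unfolding P_def
            by (rule has_vector_derivative_at_within, rule su_line_shift[OF su inS[OF that]])
          have bnd: "norm (P j (q + t *\<^sub>R j) - P j (q + 0 *\<^sub>R j)) \<le> e/4" if "t \<in> T" for t
          proof -
            have "norm (P j (q + t *\<^sub>R j) - P j (q + 0 *\<^sub>R j)) \<le>
                norm (P j (q + t *\<^sub>R j) - P j x) + norm (P j (q + 0 *\<^sub>R j) - P j x)"
              by (rule norm_diff_triangle_le[where y="P j x"]) (simp_all add: norm_minus_commute)
            then show ?thesis using Pnear[OF that] Pnear[OF T0] by simp
          qed
          have mvt: "norm (f (q + s *\<^sub>R j) - f (q + 0 *\<^sub>R j) - (s - 0) *\<^sub>R P j (q + 0 *\<^sub>R j)) \<le> norm (s - 0) * (e/4)"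
            by (rule vector_differentiable_bound_linearization[where f="\<lambda>t. f (q + t *\<^sub>R j)" and S=T,
                  OF der _ bnd T0]) (auto simp: T_def)
          have part1: "norm (f (x + h) - f q - s *\<^sub>R P j x) \<le> (3 * e / 8) * norm h"
          proof -
            have "f (x + h) - f q - s *\<^sub>R P j x =
                (f (q + s *\<^sub>R j) - f (q + 0 *\<^sub>R j) - (s - 0) *\<^sub>R P j (q + 0 *\<^sub>R j)) + s *\<^sub>R (P j q - P j x)"
              using qh by (simp add: algebra_simps)
            note eq = this
            have "norm (f (x + h) - f q - s *\<^sub>R P j x) \<le>
                norm (f (q + s *\<^sub>R j) - f (q + 0 *\<^sub>R j) - (s - 0) *\<^sub>R P j (q + 0 *\<^sub>R j)) + norm (s *\<^sub>R (P j q - P j x))"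
              unfolding eq by (rule norm_triangle_ineq)
            also have "\<dots> \<le> \<bar>s\<bar> * (e/4) + \<bar>s\<bar> * (e/8)"
            proof (rule add_mono)
              show "norm (f (q + s *\<^sub>R j) - f (q + 0 *\<^sub>R j) - (s - 0) *\<^sub>R P j (q + 0 *\<^sub>R j)) \<le> \<bar>s\<bar> * (e/4)"
                using mvt by simp
              have "norm (P j q - P j x) \<le> e/8" using Pnear[OF T0] by simp
              then have "\<bar>s\<bar> * norm (P j q - P j x) \<le> \<bar>s\<bar> * (e/8)"
                by (rule mult_left_mono) simp
              then show "norm (s *\<^sub>R (P j q - P j x)) \<le> \<bar>s\<bar> * (e/8)"
                by simp
            qed
            also have "\<dots> = \<bar>s\<bar> * (3 * e / 8)" by (simp add: algebra_simps)
            also have "\<dots> \<le> norm h * (3 * e / 8)" using s_le e by (intro mult_right_mono) auto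
            finally show ?thesis by (simp add: mult.commute)
          qed
          have split: "f (x + h) - f x - (\<Sum>i\<in>insert j B. (h \<bullet> i) *\<^sub>R P i x) =
              (f (x + h) - f q - s *\<^sub>R P j x) + (f (x + h') - f x - (\<Sum>i\<in>B. (h \<bullet> i) *\<^sub>R P i x))"
            using insert(1,2) unfolding s_def q_def by (simp add: algebra_simps)
          have "norm (f (x + h) - f x - (\<Sum>i\<in>insert j B. (h \<bullet> i) *\<^sub>R P i x)) \<le>
              (3 * e / 8) * norm h + (e/2) * norm h"
            unfolding split by (rule order_trans[OF norm_triangle_ineq add_mono[OF part1 part2]])
          also have "\<dots> \<le> e * norm h" using e by (simp add: algebra_simps)
          finally show "norm (f (x + h) - f x - (\<Sum>i\<in>insert j B. (h \<bullet> i) *\<^sub>R P i x)) \<le> e * norm h" .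
        qed
        then show "\<exists>d>0. \<forall>h. (\<forall>i\<in>Basis - insert j B. h \<bullet> i = 0) \<longrightarrow> norm h < d \<longrightarrow>
          norm (f (x + h) - f x - (\<Sum>i\<in>insert j B. (h \<bullet> i) *\<^sub>R P i x)) \<le> e * norm h"
          using d by blast
      qed
    qed
  qed
  have bl: "bounded_linear (\<lambda>h. \<Sum>i\<in>Basis. (h \<bullet> i) *\<^sub>R P i x)"
    by (intro bounded_linear_sum bounded_linear_compose[OF bounded_linear_scaleR_left bounded_linear_inner_left])
  show ?thesis
    unfolding has_derivative_at_alt P_def[symmetric]
  proof (intro conjI bl allI impI)
    fix e :: real assume e: "e > 0"
    obtain d where d: "d > 0" "\<And>h. norm h < d \<Longrightarrow>
        norm (f (x + h) - f x - (\<Sum>i\<in>Basis. (h \<bullet> i) *\<^sub>R P i x)) \<le> e * norm h"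
      using Q[OF order_refl] e by auto
    show "\<exists>d>0. \<forall>y. norm (y - x) < d \<longrightarrow> norm (f y - f x - (\<Sum>i\<in>Basis. ((y - x) \<bullet> i) *\<^sub>R P i x)) \<le> e * norm (y - x)"
    proof (intro exI[of _ d] conjI allI impI)
      show "d > 0" by (rule d(1))
      fix y assume "norm (y - x) < d"
      from d(2)[OF this] show "norm (f y - f x - (\<Sum>i\<in>Basis. ((y - x) \<bullet> i) *\<^sub>R P i x)) \<le> e * norm (y - x)"
        by simp
    qed
  qed
qed

lemma line_has_vd:
  assumes "(g has_derivative g') (at y)"
  shows "((\<lambda>t. g (y + t *\<^sub>R v)) has_vector_derivative g' v) (at 0)"
proof -
  have l: "((\<lambda>t. y + t *\<^sub>R v) has_derivative (\<lambda>t. t *\<^sub>R v)) (at 0)"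
    by (auto intro!: derivative_eq_intros)
  have a: "(g has_derivative g') (at (y + (0::real) *\<^sub>R v))" using assms by simp
  have "((\<lambda>t. g (y + t *\<^sub>R v)) has_derivative (\<lambda>t. g' (t *\<^sub>R v))) (at 0)"
    using has_derivative_compose[OF l a] by (simp add: o_def)
  moreover have "(\<lambda>t. g' (t *\<^sub>R v)) = (\<lambda>t. t *\<^sub>R g' v)"
    using linear.scaleR[OF has_derivative_linear[OF assms]] by auto
  ultimately show ?thesis unfolding has_vector_derivative_def by simp
qed

lemma su_frechet:
  fixes f :: "'a::euclidean_space \<Rightarrow> 'b::real_normed_vector"
  assumes su: "su (Suc 0) f S" and x: "x \<in> S"
  shows "(f has_derivative frechet_derivative f (at x)) (at x)"
    and "frechet_derivative f (at x) v = iter_dd [v] f x"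
proof -
  have hd: "(f has_derivative (\<lambda>h. \<Sum>i\<in>Basis. (h \<bullet> i) *\<^sub>R iter_dd [i] f x)) (at x)"
    by (rule su_has_derivative[OF su x])
  have fd: "frechet_derivative f (at x) = (\<lambda>h. \<Sum>i\<in>Basis. (h \<bullet> i) *\<^sub>R iter_dd [i] f x)"
    by (rule frechet_derivative_at[OF hd, symmetric])
  show "(f has_derivative frechet_derivative f (at x)) (at x)" unfolding fd by (rule hd)
  have "((\<lambda>t. f (x + t *\<^sub>R v)) has_vector_derivative frechet_derivative f (at x) v) (at 0)"
    unfolding fd by (rule line_has_vd[OF hd])
  then show "frechet_derivative f (at x) v = iter_dd [v] f x"
    using su_line[OF su x, of v] vector_derivative_unique_at by blast
qed

theorem lemma5p1p2:
  fixes J :: "'m::euclidean_space \<Rightarrow> ('m \<Rightarrow>\<^sub>L 'm)"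
    and U :: "'m set"
    and \<phi> :: "'k::euclidean_space \<Rightarrow> 'm"
    and W :: "'k set"
  assumes "almost_complex_on J U"
    and "embedded_param \<phi> W U"
    and "\<forall>x\<in>W. totally_real_subspace (blinfun_apply (J (\<phi> x))) (tangent_space \<phi> x)"
  shows "embedded_param (tangent_lift_param \<phi>) (W \<times> UNIV) (U \<times> UNIV) \<and>
         (\<forall>z\<in>W \<times> UNIV.
            totally_real_subspace (complete_lift J (tangent_lift_param \<phi> z))
              (tangent_space (tangent_lift_param \<phi>) z))"
proof -
  have J2: "\<And>y v. y \<in> U \<Longrightarrow> blinfun_apply (J y) (blinfun_apply (J y) v) = - v"
    using assms(1) unfolding almost_complex_on_def by blast
  have smphi: "smooth_on \<phi> W" and img: "\<phi> ` W \<subseteq> U" and injphi: "inj_on \<phi> W"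
    and cinv: "continuous_on (\<phi> ` W) (inv_into W \<phi>)"
    and injD: "\<And>x. x \<in> W \<Longrightarrow> inj (frechet_derivative \<phi> (at x))"
    using assms(2) unfolding embedded_param_def by blast+
  have suphi: "su n \<phi> W" for n using smphi smooth_on_su by blast
  have oW: "open W" by (rule su_open[OF suphi])
  define P where "P i = iter_dd [i] \<phi>" for i
  have suP: "su n (P i) W" for n i unfolding P_def by (rule su_SucD[OF suphi])
  define Lf where "Lf x h = (\<Sum>i\<in>Basis. (h \<bullet> i) *\<^sub>R P i x)" for x h
  have fdphi: "frechet_derivative \<phi> (at x) = Lf x" if "x \<in> W" for x
    unfolding Lf_def P_def
    by (rule frechet_derivative_at[OF su_has_derivative[OF suphi that], symmetric])
  have linLf: "linear (Lf x)" if "x \<in> W" for x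
    using su_frechet(1)[OF suphi that] has_derivative_linear fdphi[OF that] by metis
  have injLf: "inj (Lf x)" if "x \<in> W" for x using injD[OF that] fdphi[OF that] by simp
  have Lf0: "Lf x 0 = 0" for x unfolding Lf_def by simp
  have Lfz: "Lf x h = 0 \<Longrightarrow> h = 0" if "x \<in> W" for x h
    using injLf[OF that] Lf0 unfolding inj_def by metis
  have ddphi: "iter_dd [v] \<phi> x = Lf x v" if "x \<in> W" for x v
    using su_frechet(2)[OF suphi that] fdphi[OF that] by simp
  define F where "F z = (\<phi> (fst z), Lf (fst z) (snd z))" for z :: "'k \<times> 'k"
  define T where "T = tangent_lift_param \<phi>"
  have oWU: "open (W \<times> (UNIV::'k set))" using oW by (simp add: open_Times)
  have TF: "T z = F z" if "z \<in> W \<times> UNIV" for z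
    using that fdphi unfolding T_def F_def tangent_lift_param_def by (auto simp: case_prod_beta)
  have suL: "su n (\<lambda>z::'k \<times> 'k. Lf (fst z) (snd z)) (W \<times> UNIV)" for n
    unfolding Lf_def
  proof (rule su_sum[OF finite_Basis oWU])
    fix i :: 'k assume "i \<in> Basis"
    have a: "su n (\<lambda>z::'k \<times> 'k. snd z \<bullet> i) (W \<times> UNIV)"
      by (rule su_linear[OF oWU bounded_linear_inner_left_comp[OF bounded_linear_snd]])
    have b: "su n (\<lambda>z::'k \<times> 'k. P i (fst z)) (W \<times> UNIV)" by (rule su_fst[OF suP])
    show "su n (\<lambda>z. (snd z \<bullet> i) *\<^sub>R P i (fst z)) (W \<times> UNIV)" by (rule su_scaleR[OF a b])
  qed
  have suF: "su n F (W \<times> UNIV)" for n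
    unfolding F_def by (rule su_pair[OF su_fst[OF suphi] suL])
  have suT: "su n T (W \<times> UNIV)" for n
    by (rule su_cong[OF oWU _ suF]) (use TF in simp)
  have smT: "smooth_on T (W \<times> UNIV)" using suT smooth_on_su by blast
  have Feq: "F = (\<lambda>z. (\<phi> (fst z), Lf (fst z) (snd z)))" unfolding F_def by (rule ext) simp
  have zf: "(\<forall>v. fst (frechet_derivative T (at z) v) = Lf (fst z) (fst v)) \<and>
     (\<forall>Y. frechet_derivative T (at z) (0, Y) = (0, Lf (fst z) Y)) \<and>
     linear (frechet_derivative T (at z))" if z: "z \<in> W \<times> UNIV" for z
  proof -
    obtain x w where zxw: "z = (x, w)" by (cases z)
    have x: "x \<in> W" using z zxw by simp
    have DTv: "frechet_derivative T (at z) v = iter_dd [v] F z" for v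
      using su_frechet(2)[OF suT z] iter_dd_cong[OF oWU TF z] by simp
    have ddF: "iter_dd [v] F z = (iter_dd [v] (\<lambda>z. \<phi> (fst z)) z, iter_dd [v] (\<lambda>z. Lf (fst z) (snd z)) z)" for v
      unfolding Feq by (rule dd_pair[OF su_fst[OF suphi] suL z])
    have fst1: "fst (frechet_derivative T (at z) v) = Lf (fst z) (fst v)" for v
      unfolding DTv ddF iter_dd_fst using ddphi[OF x] zxw by simp
    have snd1: "iter_dd [(0, Y)] (\<lambda>z. Lf (fst z) (snd z)) z = Lf x Y" for Y
    proof (rule dd_eq)
      have "(\<lambda>t. Lf (fst (z + t *\<^sub>R (0, Y))) (snd (z + t *\<^sub>R (0, Y)))) = (\<lambda>t. Lf x w + t *\<^sub>R Lf x Y)"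
        using linLf[OF x] zxw by (simp add: linear_add linear_scale)
      moreover have "((\<lambda>t. Lf x w + t *\<^sub>R Lf x Y) has_vector_derivative Lf x Y) (at 0)"
        using has_vector_derivative_add[OF has_vector_derivative_const[of "Lf x w"]
          has_vector_derivative_scaleR[OF DERIV_ident has_vector_derivative_const[of "Lf x Y"]]]
        by simp
      ultimately show "((\<lambda>t. Lf (fst (z + t *\<^sub>R (0, Y))) (snd (z + t *\<^sub>R (0, Y)))) has_vector_derivative Lf x Y) (at 0)"
        by simp
    qed
    have snd2: "frechet_derivative T (at z) (0, Y) = (0, Lf (fst z) Y)" for Y
    proof -
      have "fst (frechet_derivative T (at z) (0, Y)) = 0" using fst1 Lf0 by simp
      moreover have "snd (frechet_derivative T (at z) (0, Y)) = Lf (fst z) Y"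
        unfolding DTv ddF using snd1 zxw by simp
      ultimately show ?thesis by (metis prod.collapse)
    qed
    have "linear (frechet_derivative T (at z))"
      by (rule has_derivative_linear[OF su_frechet(1)[OF suT z]])
    then show ?thesis using fst1 snd2 by blast
  qed
  have zf1: "fst (frechet_derivative T (at z) v) = Lf (fst z) (fst v)" if "z \<in> W \<times> UNIV" for z v
    using zf[OF that] by blast
  have zf2: "frechet_derivative T (at z) (0, Y) = (0, Lf (fst z) Y)" if "z \<in> W \<times> UNIV" for z Y
    using zf[OF that] by blast
  have zf3: "linear (frechet_derivative T (at z))" if "z \<in> W \<times> UNIV" for z
    using zf[OF that] by blast
  have tr0: "a = 0 \<and> b = 0" if x: "x \<in> W" and e: "Lf x a = blinfun_apply (J (\<phi> x)) (Lf x b)" for x a b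
  proof -
    have tr: "range (Lf x) \<inter> blinfun_apply (J (\<phi> x)) ` range (Lf x) = {0}"
    proof -
      have "range (frechet_derivative \<phi> (at x)) \<inter> blinfun_apply (J (\<phi> x)) ` range (frechet_derivative \<phi> (at x)) = {0}"
        using assms(3) x unfolding totally_real_subspace_def tangent_space_def by blast
      then show ?thesis unfolding fdphi[OF x] .
    qed
    have "Lf x a \<in> range (Lf x)" by (rule rangeI)
    moreover have "Lf x a \<in> blinfun_apply (J (\<phi> x)) ` range (Lf x)" unfolding e by (intro imageI rangeI)
    ultimately have "Lf x a \<in> range (Lf x) \<inter> blinfun_apply (J (\<phi> x)) ` range (Lf x)" by blast
    then have A: "Lf x a = 0" using tr by blast
    then have a: "a = 0" by (rule Lfz[OF x])
    have "blinfun_apply (J (\<phi> x)) (Lf x b) = 0" using A e by simp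
    moreover have "\<phi> x \<in> U" using img x by blast
    ultimately have "Lf x b = 0" using J2[of "\<phi> x" "Lf x b"] by simp
    then have "b = 0" by (rule Lfz[OF x])
    then show ?thesis using a by simp
  qed
  have cl1: "fst (complete_lift J (a, b) (c, d)) = blinfun_apply (J a) c" for a b c d
    by (simp add: complete_lift_def)
  have cl2: "complete_lift J (a, b) (0, d) = (0, blinfun_apply (J a) d)" for a b d
    by (simp add: complete_lift_def)
  have injDT: "inj (frechet_derivative T (at z))" if z: "z \<in> W \<times> UNIV" for z
  proof -
    have fz: "fst z \<in> W" using z by auto
    have "v = 0" if v: "frechet_derivative T (at z) v = 0" for v
    proof -
      have "Lf (fst z) (fst v) = fst (frechet_derivative T (at z) v)" by (rule zf1[OF z, symmetric])
      also have "\<dots> = 0" using v by simp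
      finally have f0: "fst v = 0" by (rule Lfz[OF fz])
      obtain Y where vY: "v = (0, Y)" using f0 by (cases v) simp
      have "(0, Lf (fst z) Y) = frechet_derivative T (at z) (0, Y)" by (rule zf2[OF z, symmetric])
      also have "\<dots> = 0" using v vY by simp
      finally have "(0, Lf (fst z) Y) = (0::'m \<times> 'm)" .
      then have "Lf (fst z) Y = 0" by (simp add: zero_prod_def)
      then have "Y = 0" by (rule Lfz[OF fz])
      then show "v = 0" using vY by (simp add: zero_prod_def)
    qed
    then show ?thesis using linear_injective_0[OF zf3[OF z]] by blast
  qed
  have TR: "totally_real_subspace (complete_lift J (T z)) (tangent_space T z)" if z: "z \<in> W \<times> UNIV" for z
  proof -
    obtain x w where zxw: "z = (x, w)" by (cases z)
    have x: "x \<in> W" using z zxw by simp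
    have fx: "fst z = x" using zxw by simp
    have Tz: "T z = (\<phi> x, Lf x w)" using TF[OF z] zxw F_def by simp
    let ?D = "frechet_derivative T (at z)"
    let ?J = "complete_lift J (\<phi> x, Lf x w)"
    have D0: "?D 0 = 0" by (rule linear_0[OF zf3[OF z]])
    have J0: "?J 0 = 0" using cl2[of "\<phi> x" "Lf x w" 0] by (simp add: zero_prod_def)
    have sub: "p = 0" if p1: "p \<in> range ?D" and p2: "p \<in> ?J ` range ?D" for p
    proof -
      obtain v where v: "p = ?D v" using p1 by blast
      obtain v' where v': "p = ?J (?D v')" using p2 by blast
      have e1: "fst p = Lf x (fst v)" using v zf1[OF z, of v] fx by simp
      obtain c d where cd: "?D v' = (c, d)" by (cases "?D v'")
      have c: "c = Lf x (fst v')" using zf1[OF z, of v'] fx cd by simp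
      have e2: "fst p = blinfun_apply (J (\<phi> x)) c" using v' cd cl1 by simp
      have "Lf x (fst v) = blinfun_apply (J (\<phi> x)) (Lf x (fst v'))" using e1 e2 c by simp
      then have f0: "fst v = 0" "fst v' = 0" using tr0[OF x] by auto
      obtain Y where vY: "v = (0, Y)" using f0(1) by (cases v) simp
      obtain Y' where vY': "v' = (0, Y')" using f0(2) by (cases v') simp
      have Dv: "?D v = (0, Lf x Y)" using zf2[OF z, of Y] fx vY by simp
      have Dv': "?D v' = (0, Lf x Y')" using zf2[OF z, of Y'] fx vY' by simp
      have "(0, Lf x Y) = (0, blinfun_apply (J (\<phi> x)) (Lf x Y'))"
        using v v' Dv Dv' cl2 by simp
      then have "Lf x Y = blinfun_apply (J (\<phi> x)) (Lf x Y')" by simp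
      then have "Y = 0" using tr0[OF x] by auto
      then show "p = 0" using v Dv Lf0 by (simp add: zero_prod_def)
    qed
    have "range ?D \<inter> ?J ` range ?D = {0}"
    proof
      show "range ?D \<inter> ?J ` range ?D \<subseteq> {0}" using sub by blast
      have a: "0 \<in> range ?D" using D0 by (metis rangeI)
      then have "?J 0 \<in> ?J ` range ?D" by (rule imageI)
      then have "0 \<in> ?J ` range ?D" unfolding J0 .
      then show "{0} \<subseteq> range ?D \<inter> ?J ` range ?D" using a by blast
    qed
    then show ?thesis unfolding totally_real_subspace_def tangent_space_def Tz .
  qed
  have injT: "inj_on T (W \<times> UNIV)"
  proof (rule inj_onI)
    fix z z' assume z: "z \<in> W \<times> UNIV" and z': "z' \<in> W \<times> UNIV" and e: "T z = T z'"
    have "F z = F z'" using TF[OF z] TF[OF z'] e by simp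
    then have e1: "\<phi> (fst z) = \<phi> (fst z')" and e2: "Lf (fst z) (snd z) = Lf (fst z') (snd z')"
      unfolding F_def by simp_all
    have fz: "fst z \<in> W" "fst z' \<in> W" using z z' by auto
    have f: "fst z = fst z'" by (rule inj_onD[OF injphi e1 fz])
    have "Lf (fst z) (snd z) = Lf (fst z) (snd z')" using e2 f by simp
    then have "snd z = snd z'" by (rule Fun.injD[OF injLf[OF fz(1)]])
    then show "z = z'" using f by (simp add: prod_eq_iff)
  qed
  have imgT: "T ` (W \<times> UNIV) \<subseteq> U \<times> UNIV"
  proof (rule image_subsetI)
    fix z assume z: "z \<in> W \<times> (UNIV::'k set)"
    have "\<phi> (fst z) \<in> U" using img z by auto
    then show "T z \<in> U \<times> UNIV" unfolding TF[OF z] F_def by simp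
  qed
  have contG: "continuous_on (T ` (W \<times> UNIV)) (inv_into (W \<times> UNIV) T)"
  proof -
    define Im where "Im = T ` (W \<times> (UNIV::'k set))"
    define G where "G = inv_into (W \<times> (UNIV::'k set)) T"
    define \<psi> where "\<psi> = inv_into W \<phi>"
    have GIm: "G p \<in> W \<times> UNIV" if "p \<in> Im" for p
      using that unfolding G_def Im_def by (rule inv_into_into)
    have TG: "T (G p) = p" if "p \<in> Im" for p
      using that unfolding G_def Im_def by (rule f_inv_into_f)
    have FG: "\<phi> (fst (G p)) = fst p \<and> Lf (fst (G p)) (snd (G p)) = snd p" if p: "p \<in> Im" for p
      using TG[OF p] TF[OF GIm[OF p]] unfolding F_def by (metis fst_conv snd_conv)
    have fstG: "fst (G p) = \<psi> (fst p)" if p: "p \<in> Im" for p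
    proof -
      have "fst (G p) \<in> W" using GIm[OF p] by auto
      then have "\<psi> (\<phi> (fst (G p))) = fst (G p)" unfolding \<psi>_def by (rule inv_into_f_f[OF injphi])
      then show ?thesis using FG[OF p] by simp
    qed
    have fstIm: "fst ` Im \<subseteq> \<phi> ` W"
    proof
      fix y assume "y \<in> fst ` Im"
      then obtain z where z: "z \<in> W \<times> UNIV" "y = fst (T z)" unfolding Im_def by blast
      then show "y \<in> \<phi> ` W" using TF[OF z(1)] unfolding F_def by auto
    qed
    have psiW: "\<psi> y \<in> W" if "y \<in> \<phi> ` W" for y unfolding \<psi>_def using that by (rule inv_into_into)
    have contX: "continuous_on Im (\<lambda>p. \<psi> (fst p))"
      by (rule continuous_on_compose2[OF cinv[folded \<psi>_def] continuous_on_fst[OF continuous_on_id] fstIm])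
    have XW: "\<psi> (fst p) \<in> W" if "p \<in> Im" for p using psiW fstIm that by blast
    show ?thesis
      unfolding Im_def[symmetric] G_def[symmetric] continuous_on_def
    proof
      fix p0 assume p0: "p0 \<in> Im"
      define x0 where "x0 = fst (G p0)"
      define w0 where "w0 = snd (G p0)"
      have x0W: "x0 \<in> W" using GIm[OF p0] x0_def by auto
      have x0psi: "\<psi> (fst p0) = x0" using fstG[OF p0] x0_def by simp
      have p0snd: "snd p0 = Lf x0 w0" using FG[OF p0] x0_def w0_def by simp
      obtain c where c: "c > 0" "\<And>u. c * norm u \<le> norm (Lf x0 u)"
        using linear_inj_bounded_below_pos[OF linLf[OF x0W] injLf[OF x0W]] by blast
      define E where "E x = (\<Sum>i\<in>Basis. norm (P i x - P i x0))" for x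
      have Ebound: "norm (Lf x u - Lf x0 u) \<le> norm u * E x" for x u
      proof -
        have "Lf x u - Lf x0 u = (\<Sum>i\<in>Basis. (u \<bullet> i) *\<^sub>R (P i x - P i x0))"
          unfolding Lf_def by (simp add: sum_subtractf scaleR_diff_right)
        then have "norm (Lf x u - Lf x0 u) \<le> (\<Sum>i\<in>Basis. norm ((u \<bullet> i) *\<^sub>R (P i x - P i x0)))"
          using norm_sum[of "\<lambda>i. (u \<bullet> i) *\<^sub>R (P i x - P i x0)" Basis] by simp
        also have "\<dots> \<le> (\<Sum>i\<in>Basis. norm u * norm (P i x - P i x0))"
        proof (rule sum_mono)
          fix i :: 'k assume i: "i \<in> Basis"
          have "\<bar>u \<bullet> i\<bar> * norm (P i x - P i x0) \<le> norm u * norm (P i x - P i x0)"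
            by (rule mult_right_mono[OF Basis_le_norm[OF i]]) simp
          then show "norm ((u \<bullet> i) *\<^sub>R (P i x - P i x0)) \<le> norm u * norm (P i x - P i x0)" by simp
        qed
        also have "\<dots> = norm u * E x" unfolding E_def by (simp add: sum_distrib_left)
        finally show ?thesis .
      qed
      have contE: "continuous_on W E"
        unfolding E_def by (intro continuous_on_sum continuous_on_norm continuous_on_diff continuous_on_const su_cont[OF suP])
      define cE where "cE p = E (\<psi> (fst p))" for p :: "'m \<times> 'm"
      have contcE: "continuous_on Im cE"
        unfolding cE_def by (rule continuous_on_compose2[OF contE contX]) (use XW in blast)
      have E0: "E x0 = 0" unfolding E_def by simp
      have cElim: "(cE \<longlongrightarrow> 0) (at p0 within Im)"
        using contcE p0 unfolding continuous_on_def cE_def x0psi E0 by (metis x0psi E0)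
      have ev1: "eventually (\<lambda>p. cE p < c/2) (at p0 within Im)"
      proof -
        have "c/2 > 0" using c(1) by simp
        then show ?thesis by (rule order_tendstoD(2)[OF cElim])
      qed
      have evIm: "eventually (\<lambda>p. p \<in> Im) (at p0 within Im)"
        unfolding eventually_at_filter by simp
      define g where "g p = (2/c) * (norm (snd p - snd p0) + norm w0 * cE p)" for p :: "'m \<times> 'm"
      have glim: "(g \<longlongrightarrow> 0) (at p0 within Im)"
      proof -
        have "((\<lambda>p. snd p) \<longlongrightarrow> snd p0) (at p0 within Im)" by (intro tendsto_intros)
        then have "((\<lambda>p. norm (snd p - snd p0)) \<longlongrightarrow> norm (snd p0 - snd p0)) (at p0 within Im)"
          by (intro tendsto_intros)
        then have a: "((\<lambda>p. norm (snd p - snd p0)) \<longlongrightarrow> 0) (at p0 within Im)" by simp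
        have "(g \<longlongrightarrow> (2/c) * (0 + norm w0 * 0)) (at p0 within Im)"
          unfolding g_def by (intro tendsto_intros a cElim)
        then show ?thesis by simp
      qed
      have evb: "eventually (\<lambda>p. norm (snd (G p) - w0) \<le> g p) (at p0 within Im)"
        using ev1 evIm
      proof eventually_elim
        case (elim p)
        then have p: "p \<in> Im" and small: "cE p < c/2" by auto
        define x where "x = fst (G p)"
        define w where "w = snd (G p)"
        have xW: "x \<in> W" using GIm[OF p] x_def by auto
        have Ex: "E x < c/2" using small fstG[OF p] unfolding cE_def x_def by simp
        have Lw: "Lf x w = snd p" using FG[OF p] x_def w_def by simp
        have lb: "(c/2) * norm u \<le> norm (Lf x u)" for u
        proof -
          have "c * norm u \<le> norm (Lf x0 u)" by (rule c(2))
          also have "\<dots> \<le> norm (Lf x u) + norm (Lf x u - Lf x0 u)" by norm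
          also have "\<dots> \<le> norm (Lf x u) + norm u * E x" using Ebound by simp
          also have "\<dots> \<le> norm (Lf x u) + norm u * (c/2)" using Ex by (intro add_left_mono mult_left_mono) auto
          finally show ?thesis by (simp add: algebra_simps)
        qed
        have "Lf x (w - w0) = snd p - Lf x w0" using linear_diff[OF linLf[OF xW]] Lw by simp
        also have "norm (snd p - Lf x w0) \<le> norm (snd p - snd p0) + norm (Lf x0 w0 - Lf x w0)"
          unfolding p0snd by (rule norm_diff_triangle_le[OF order_refl order_refl])
        hence "norm (snd p - Lf x w0) \<le> norm (snd p - snd p0) + norm w0 * E x"
          using Ebound[of x w0] by (simp add: norm_minus_commute)
        ultimately have "(c/2) * norm (w - w0) \<le> norm (snd p - snd p0) + norm w0 * E x"
          using lb[of "w - w0"] by simp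
        then have "norm (w - w0) \<le> (2/c) * (norm (snd p - snd p0) + norm w0 * E x)"
          using c(1) by (simp add: field_simps)
        then show ?case unfolding g_def cE_def w_def using fstG[OF p] x_def by simp
      qed
      have "((\<lambda>p. snd (G p) - w0) \<longlongrightarrow> 0) (at p0 within Im)"
        by (rule Lim_null_comparison[OF evb glim])
      then have sndlim: "((\<lambda>p. snd (G p)) \<longlongrightarrow> w0) (at p0 within Im)" by (rule LIM_zero_cancel)
      have "((\<lambda>p. \<psi> (fst p)) \<longlongrightarrow> x0) (at p0 within Im)"
        using contX p0 unfolding continuous_on_def by (metis x0psi)
      moreover have "eventually (\<lambda>p. \<psi> (fst p) = fst (G p)) (at p0 within Im)"
        using evIm by eventually_elim (simp add: fstG)
      ultimately have fstlim: "((\<lambda>p. fst (G p)) \<longlongrightarrow> x0) (at p0 within Im)"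
        using tendsto_cong by fastforce
      have "((\<lambda>p. (fst (G p), snd (G p))) \<longlongrightarrow> (x0, w0)) (at p0 within Im)"
        by (rule tendsto_Pair[OF fstlim sndlim])
      then show "(G \<longlongrightarrow> G p0) (at p0 within Im)" unfolding x0_def w0_def by simp
    qed
  qed
  show ?thesis
    unfolding T_def[symmetric] embedded_param_def
    using smT imgT injT contG injDT TR by blast
qed

end
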